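(* Let $G=(\hat X,\hat\Sigma,\delta,\hat x_0,\hat x_m)$ be a bi-fuzzy automaton over a crisp state set with $n$ elements, with generated language $L_G$ and marked language $L_{G,m}$. Then for every string $s\in\hat\Sigma^*$ and every event $\sigma\in\hat\Sigma$, $$L_{G,m}(s\sigma)\sqsubseteq L_G(s\sigma)\sqsubseteq L_G(s).$$
   Context: $NCFD$ is the set of normal convex type-1 fuzzy sets $\mu:[0,1]\to[0,1]$ ($\max_u\mu(u)=1$, and $\mu(u_j)\ge\min\{\mu(u_i),\mu(u_k)\}$ for $u_i\le u_j\le u_k$); $a/u_0$ denotes the fuzzy set with value $a$ at $u_0$ and $0$ elsewhere. Operations: $(\mu_1\sqcup\mu_2)(v)=\sup\{\min(\mu_1(u),\mu_2(w)):\max(u,w)=v\}$, $(\mu_1\sqcap\mu_2)(v)=\sup\{\min(\mu_1(u),\mu_2(w)):\min(u,w)=v\}$; $\mu_1\sqsubseteq\mu_2$ iff $\mu_1\sqcap\mu_2=\mu_1$. For matrices $R$ ($p\times n$) and $S$ ($n\times k$) with entries in $NCFD$, $(R\odot S)(x,z)=\bigsqcup_{y}[R(x,y)\sqcap S(y,z)]$. A bi-fuzzy automaton $G=(\hat X,\hat\Sigma,\delta,\hat x_0,\hat x_m)$ over a crisp state set $X$ with $|X|=n$ consists of: bi-fuzzy states, which are row vectors of length $n$ with entries in $NCFD$; a set $\hat\Sigma$ of events, each event $\sigma$ being an $n\times n$ matrix with entries in $NCFD$; transition function $\delta(\hat x,\sigma)=\hat x\odot\sigma$; an initial bi-fuzzy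 state $\hat x_0$ and a final bi-fuzzy state $\hat x_m$ (row vectors in $NCFD^n$). Its generated and marked languages $L_G,L_{G,m}:\hat\Sigma^*\to NCFD$ are given by $L_G(\epsilon)=L_{G,m}(\epsilon)=1/1$ and, for $s=\sigma_1\cdots\sigma_k$ with $k>0$, $L_G(s)=\hat x_0\odot\sigma_1\odot\cdots\odot\sigma_k\odot A_n^T$ and $L_{G,m}(s)=\hat x_0\odot\sigma_1\odot\cdots\odot\sigma_k\odot\hat x_m^T$, where $A_n=[1/1,\dots,1/1]$ (length $n$) and $T$ is transpose. *)

theory Defs
  imports Complex_Main
begin

text \<open>Type-1 fuzzy sets on [0,1], represented as real functions that vanish outside [0,1].\<close>
type_synonym fuzzy = "real \<Rightarrow> real"

definition NCFD :: "fuzzy \<Rightarrow> bool" where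
  "NCFD \<mu> \<longleftrightarrow>
     (\<forall>u. u \<notin> {0..1} \<longrightarrow> \<mu> u = 0) \<and>
     (\<forall>u\<in>{0..1}. 0 \<le> \<mu> u \<and> \<mu> u \<le> 1) \<and>
     (\<exists>u\<in>{0..1}. \<mu> u = 1) \<and>
     (\<forall>ui\<in>{0..1}. \<forall>uj\<in>{0..1}. \<forall>uk\<in>{0..1}.
        ui \<le> uj \<and> uj \<le> uk \<longrightarrow> \<mu> uj \<ge> min (\<mu> ui) (\<mu> uk))"

definition fpt :: "real \<Rightarrow> real \<Rightarrow> fuzzy" where
  "fpt a u0 = (\<lambda>u. if u = u0 then a else 0)"

definition fjoin :: "fuzzy \<Rightarrow> fuzzy \<Rightarrow> fuzzy" where
  "fjoin \<mu>1 \<mu>2 = (\<lambda>v. if v \<in> {0..1} then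
      Sup {min (\<mu>1 u) (\<mu>2 w) | u w. u \<in> {0..1} \<and> w \<in> {0..1} \<and> max u w = v}
    else 0)"

definition fmeet :: "fuzzy \<Rightarrow> fuzzy \<Rightarrow> fuzzy" where
  "fmeet \<mu>1 \<mu>2 = (\<lambda>v. if v \<in> {0..1} then
      Sup {min (\<mu>1 u) (\<mu>2 w) | u w. u \<in> {0..1} \<and> w \<in> {0..1} \<and> min u w = v}
    else 0)"

definition fsub :: "fuzzy \<Rightarrow> fuzzy \<Rightarrow> bool" where
  "fsub \<mu>1 \<mu>2 \<longleftrightarrow> fmeet \<mu>1 \<mu>2 = \<mu>1"

text \<open>Iterated join over indices 0..n-1 (for n >= 1).\<close>
definition bigjoin :: "nat \<Rightarrow> (nat \<Rightarrow> fuzzy) \<Rightarrow> fuzzy" where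
  "bigjoin n f = foldl (\<lambda>acc y. fjoin acc (f y)) (f 0) [1..<n]"

text \<open>Row vectors: nat => fuzzy (indices < n); matrices: nat => nat => fuzzy.\<close>
type_synonym fvec = "nat \<Rightarrow> fuzzy"
type_synonym fmat = "nat \<Rightarrow> nat \<Rightarrow> fuzzy"

definition vecmat :: "nat \<Rightarrow> fvec \<Rightarrow> fmat \<Rightarrow> fvec" where
  "vecmat n x M = (\<lambda>z. bigjoin n (\<lambda>y. fmeet (x y) (M y z)))"

definition vecdot :: "nat \<Rightarrow> fvec \<Rightarrow> fvec \<Rightarrow> fuzzy" where
  "vecdot n x c = bigjoin n (\<lambda>y. fmeet (x y) (c y))"

definition run :: "nat \<Rightarrow> fvec \<Rightarrow> fmat list \<Rightarrow> fvec" where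
  "run n x s = foldl (vecmat n) x s"

definition bifuzzy_automaton :: "nat \<Rightarrow> fmat set \<Rightarrow> fvec \<Rightarrow> fvec \<Rightarrow> bool" where
  "bifuzzy_automaton n Ev x0 xm \<longleftrightarrow> 0 < n \<and>
     (\<forall>i<n. NCFD (x0 i)) \<and> (\<forall>i<n. NCFD (xm i)) \<and>
     (\<forall>\<sigma>\<in>Ev. \<forall>i<n. \<forall>j<n. NCFD (\<sigma> i j))"

definition LG :: "nat \<Rightarrow> fvec \<Rightarrow> fmat list \<Rightarrow> fuzzy" where
  "LG n x0 s = (if s = [] then fpt 1 1 else vecdot n (run n x0 s) (\<lambda>_. fpt 1 1))"

definition LGm :: "nat \<Rightarrow> fvec \<Rightarrow> fvec \<Rightarrow> fmat list \<Rightarrow> fuzzy" where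
  "LGm n x0 xm s = (if s = [] then fpt 1 1 else vecdot n (run n x0 s) xm)"

end

theory Submission
  imports Defs
begin

definition rep :: "fuzzy \<Rightarrow> fuzzy \<Rightarrow> fuzzy \<Rightarrow> real \<Rightarrow> bool" where
 "rep f A B m \<longleftrightarrow> 0 \<le> m \<and> m \<le> 1 \<and> (\<forall>u. u \<notin> {0..1} \<longrightarrow> f u = 0) \<and>
   (\<forall>v\<in>{0..1}. f v = min (A v) (B v) \<and> 0 \<le> A v \<and> A v \<le> 1 \<and> 0 \<le> B v \<and> B v \<le> 1
       \<and> (m \<le> v \<longrightarrow> A v = 1) \<and> (v \<le> m \<longrightarrow> B v = 1)) \<and>
   (\<forall>u v. 0 \<le> u \<longrightarrow> u \<le> v \<longrightarrow> v \<le> 1 \<longrightarrow> A u \<le> A v \<and> B v \<le> B u)"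

definition nc :: "fuzzy \<Rightarrow> bool" where "nc f \<longleftrightarrow> (\<exists>A B m. rep f A B m)"

definition fL :: "fuzzy \<Rightarrow> fuzzy" where
  "fL f v = (if \<exists>u. 0 \<le> u \<and> u \<le> v \<and> f u = 1 then 1 else f v)"
definition fR :: "fuzzy \<Rightarrow> fuzzy" where
  "fR f v = (if \<exists>u. v \<le> u \<and> u \<le> 1 \<and> f u = 1 then 1 else f v)"

definition le :: "fuzzy \<Rightarrow> fuzzy \<Rightarrow> bool" where
  "le f g \<longleftrightarrow> (\<forall>v\<in>{0..1}. fL g v \<le> fL f v \<and> fR f v \<le> fR g v)"

lemma rep_L:
  assumes r: "rep f A B m" and v: "v \<in> {0..1}"
  shows "fL f v = A v"
proof (cases "\<exists>u. 0 \<le> u \<and> u \<le> v \<and> f u = 1")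
  case True
  then obtain u where u: "0 \<le> u" "u \<le> v" "f u = 1" by blast
  have uu: "u \<in> {0..1}" using u v by auto
  have "A u \<ge> 1" using r uu u unfolding rep_def by (metis min.bounded_iff order_refl)
  moreover have "A u \<le> A v" using r u v unfolding rep_def by auto
  moreover have "A v \<le> 1" using r v unfolding rep_def by auto
  ultimately show ?thesis using True unfolding fL_def by auto
next
  case False
  have m: "0 \<le> m" "m \<le> 1" using r unfolding rep_def by auto
  have fm: "f m = 1" using r m unfolding rep_def by auto
  have "v < m" using False fm m by (cases "m \<le> v") auto
  then have "B v = 1" using r v unfolding rep_def by auto
  then show ?thesis using False r v unfolding fL_def rep_def by auto
qed

lemma rep_R:
  assumes r: "rep f A B m" and v: "v \<in> {0..1}"
  shows "fR f v = B v"
proof (cases "\<exists>u. v \<le> u \<and> u \<le> 1 \<and> f u = 1")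
  case True
  then obtain u where u: "v \<le> u" "u \<le> 1" "f u = 1" by blast
  have uu: "u \<in> {0..1}" using u v by auto
  have "B u \<ge> 1" using r uu u unfolding rep_def by (metis min.bounded_iff order_refl)
  moreover have "B u \<le> B v" using r u v unfolding rep_def by auto
  moreover have "B v \<le> 1" using r v unfolding rep_def by auto
  ultimately show ?thesis using True unfolding fR_def by auto
next
  case False
  have m: "0 \<le> m" "m \<le> 1" using r unfolding rep_def by auto
  have fm: "f m = 1" using r m unfolding rep_def by auto
  have "m < v" using False fm m by (cases "v \<le> m") auto
  then have "A v = 1" using r v unfolding rep_def by auto
  then show ?thesis using False r v unfolding fR_def rep_def by auto
qed

lemma rep_canon: assumes r: "rep f A B m" shows "rep f (fL f) (fR f) m"
proof -
  have e: "\<And>v. v \<in> {0..1} \<Longrightarrow> fL f v = A v \<and> fR f v = B v" using rep_L rep_R r by blast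
  show ?thesis using r unfolding rep_def
    apply (intro conjI)
        apply blast
       apply blast
      apply blast
     apply (simp add: e)
    apply (intro allI impI)
    apply (subst e, simp)+
    apply auto
    done
qed

lemma nc_canon: "nc f \<Longrightarrow> \<exists>m. rep f (fL f) (fR f) m"
  unfolding nc_def using rep_canon by blast

lemma meet_val:
  assumes rf: "rep f A B p" and rg: "rep g C D q" and v: "v \<in> {0..1}"
  shows "fmeet f g v = min (max (A v) (C v)) (min (B v) (D v))"
proof -
  let ?S = "{min (f u) (g w) |u w. u \<in> {0..1} \<and> w \<in> {0..1} \<and> min u w = v}"
  define z1 where "z1 = min (f v) (D v)"
  define z2 where "z2 = min (B v) (g v)"
  have q: "0 \<le> q" "q \<le> 1" and p: "0 \<le> p" "p \<le> 1" using rf rg unfolding rep_def by auto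
  have gq: "g q = 1" using rg q unfolding rep_def by auto
  have fp: "f p = 1" using rf p unfolding rep_def by auto
  have z1S: "z1 \<in> ?S"
  proof (cases "v \<le> q")
    case True
    then have "D v = 1" using rg v unfolding rep_def by auto
    then have "z1 = min (f v) (g q)" using gq z1_def by simp
    then show ?thesis using v q True by force
  next
    case False
    then have "C v = 1" using rg v unfolding rep_def by auto
    then have "g v = D v" using rg v unfolding rep_def by auto
    then show ?thesis using v z1_def by force
  qed
  have z2S: "z2 \<in> ?S"
  proof (cases "v \<le> p")
    case True
    then have "B v = 1" using rf v unfolding rep_def by auto
    then have "z2 = min (f p) (g v)" using fp z2_def by simp
    then show ?thesis using v p True by force
  next
    case False
    then have "A v = 1" using rf v unfolding rep_def by auto
    then have "f v = B v" using rf v unfolding rep_def by auto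
    then show ?thesis using v z2_def by force
  qed
  have mS: "max z1 z2 \<in> ?S" using z1S z2S by (simp add: max_def)
  have ub: "\<forall>x\<in>?S. x \<le> max z1 z2"
  proof
    fix x assume "x \<in> ?S"
    then obtain u w where uw: "x = min (f u) (g w)" "u \<in> {0..1}" "w \<in> {0..1}" "min u w = v" by blast
    show "x \<le> max z1 z2"
    proof (cases "u \<le> w")
      case True
      then have "u = v" using uw by (simp add: min_def)
      have "g w \<le> D w" using rg uw unfolding rep_def by auto
      also have "D w \<le> D v" using rg uw True \<open>u = v\<close> unfolding rep_def by auto
      finally have "x \<le> z1" using uw \<open>u = v\<close> z1_def by auto
      then show ?thesis by simp
    next
      case False
      then have "w = v" using uw by (simp add: min_def)
      have "f u \<le> B u" using rf uw unfolding rep_def by auto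
      also have "B u \<le> B v" using rf uw False \<open>w = v\<close> unfolding rep_def by auto
      finally have "x \<le> z2" using uw \<open>w = v\<close> z2_def by auto
      then show ?thesis by simp
    qed
  qed
  have "Sup ?S = max z1 z2" by (rule cSup_eq_maximum[OF mS]) (use ub in blast)
  moreover have "fmeet f g v = Sup ?S" using v unfolding fmeet_def by simp
  moreover have "f v = min (A v) (B v)" "g v = min (C v) (D v)" using rf rg v unfolding rep_def by auto
  ultimately show ?thesis unfolding z1_def z2_def by (auto simp: min_def max_def)
qed

lemma join_val:
  assumes rf: "rep f A B p" and rg: "rep g C D q" and v: "v \<in> {0..1}"
  shows "fjoin f g v = min (min (A v) (C v)) (max (B v) (D v))"
proof -
  let ?S = "{min (f u) (g w) |u w. u \<in> {0..1} \<and> w \<in> {0..1} \<and> max u w = v}"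
  define z1 where "z1 = min (f v) (C v)"
  define z2 where "z2 = min (A v) (g v)"
  have q: "0 \<le> q" "q \<le> 1" and p: "0 \<le> p" "p \<le> 1" using rf rg unfolding rep_def by auto
  have gq: "g q = 1" using rg q unfolding rep_def by auto
  have fp: "f p = 1" using rf p unfolding rep_def by auto
  have z1S: "z1 \<in> ?S"
  proof (cases "q \<le> v")
    case True
    then have "C v = 1" using rg v unfolding rep_def by auto
    then have "z1 = min (f v) (g q)" using gq z1_def by simp
    then show ?thesis using v q True by force
  next
    case False
    then have "D v = 1" using rg v unfolding rep_def by auto
    then have "g v = C v" using rg v unfolding rep_def by auto
    then show ?thesis using v z1_def by force
  qed
  have z2S: "z2 \<in> ?S"
  proof (cases "p \<le> v")
    case True
    then have "A v = 1" using rf v unfolding rep_def by auto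
    then have "z2 = min (f p) (g v)" using fp z2_def by simp
    then show ?thesis using v p True by force
  next
    case False
    then have "B v = 1" using rf v unfolding rep_def by auto
    then have "f v = A v" using rf v unfolding rep_def by auto
    then show ?thesis using v z2_def by force
  qed
  have mS: "max z1 z2 \<in> ?S" using z1S z2S by (simp add: max_def)
  have ub: "\<forall>x\<in>?S. x \<le> max z1 z2"
  proof
    fix x assume "x \<in> ?S"
    then obtain u w where uw: "x = min (f u) (g w)" "u \<in> {0..1}" "w \<in> {0..1}" "max u w = v" by blast
    show "x \<le> max z1 z2"
    proof (cases "w \<le> u")
      case True
      then have "u = v" using uw by (simp add: max_def)
      have "g w \<le> C w" using rg uw unfolding rep_def by auto
      also have "C w \<le> C v" using rg uw True \<open>u = v\<close> unfolding rep_def by auto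
      finally have "x \<le> z1" using uw \<open>u = v\<close> z1_def by auto
      then show ?thesis by simp
    next
      case False
      then have "w = v" using uw by (simp add: max_def)
      have "f u \<le> A u" using rf uw unfolding rep_def by auto
      also have "A u \<le> A v" using rf uw False \<open>w = v\<close> unfolding rep_def by auto
      finally have "x \<le> z2" using uw \<open>w = v\<close> z2_def by auto
      then show ?thesis by simp
    qed
  qed
  have "Sup ?S = max z1 z2" by (rule cSup_eq_maximum[OF mS]) (use ub in blast)
  moreover have "fjoin f g v = Sup ?S" using v unfolding fjoin_def by simp
  moreover have "f v = min (A v) (B v)" "g v = min (C v) (D v)" using rf rg v unfolding rep_def by auto
  ultimately show ?thesis unfolding z1_def z2_def by (auto simp: min_def max_def)
qed

lemma meet_rep:
  assumes rf: "rep f A B p" and rg: "rep g C D q"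
  shows "rep (fmeet f g) (\<lambda>v. max (A v) (C v)) (\<lambda>v. min (B v) (D v)) (min p q)"
  unfolding rep_def
proof (intro conjI)
  show "0 \<le> min p q" "min p q \<le> 1" using rf rg unfolding rep_def by auto
  show "\<forall>u. u \<notin> {0..1} \<longrightarrow> fmeet f g u = 0" by (simp add: fmeet_def)
  show "\<forall>v\<in>{0..1}. fmeet f g v = min (max (A v) (C v)) (min (B v) (D v)) \<and>
     0 \<le> max (A v) (C v) \<and> max (A v) (C v) \<le> 1 \<and> 0 \<le> min (B v) (D v) \<and> min (B v) (D v) \<le> 1 \<and>
     (min p q \<le> v \<longrightarrow> max (A v) (C v) = 1) \<and> (v \<le> min p q \<longrightarrow> min (B v) (D v) = 1)"
  proof
    fix v :: real assume v: "v \<in> {0..1}"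
    have a: "0 \<le> A v" "A v \<le> 1" "0 \<le> B v" "B v \<le> 1" "p \<le> v \<longrightarrow> A v = 1" "v \<le> p \<longrightarrow> B v = 1"
      using rf v unfolding rep_def by auto
    have c: "0 \<le> C v" "C v \<le> 1" "0 \<le> D v" "D v \<le> 1" "q \<le> v \<longrightarrow> C v = 1" "v \<le> q \<longrightarrow> D v = 1"
      using rg v unfolding rep_def by auto
    show "fmeet f g v = min (max (A v) (C v)) (min (B v) (D v)) \<and>
     0 \<le> max (A v) (C v) \<and> max (A v) (C v) \<le> 1 \<and> 0 \<le> min (B v) (D v) \<and> min (B v) (D v) \<le> 1 \<and>
     (min p q \<le> v \<longrightarrow> max (A v) (C v) = 1) \<and> (v \<le> min p q \<longrightarrow> min (B v) (D v) = 1)"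
      using meet_val[OF rf rg v] a c by (auto simp: min_def max_def)
  qed
  show "\<forall>u v. 0 \<le> u \<longrightarrow> u \<le> v \<longrightarrow> v \<le> 1 \<longrightarrow> max (A u) (C u) \<le> max (A v) (C v) \<and> min (B v) (D v) \<le> min (B u) (D u)"
  proof (intro allI impI)
    fix u v :: real assume uv: "0 \<le> u" "u \<le> v" "v \<le> 1"
    have "A u \<le> A v" "B v \<le> B u" using rf uv unfolding rep_def by auto
    moreover have "C u \<le> C v" "D v \<le> D u" using rg uv unfolding rep_def by auto
    ultimately show "max (A u) (C u) \<le> max (A v) (C v) \<and> min (B v) (D v) \<le> min (B u) (D u)"
      by linarith
  qed
qed

lemma join_rep:
  assumes rf: "rep f A B p" and rg: "rep g C D q"
  shows "rep (fjoin f g) (\<lambda>v. min (A v) (C v)) (\<lambda>v. max (B v) (D v)) (max p q)"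
  unfolding rep_def
proof (intro conjI)
  show "0 \<le> max p q" "max p q \<le> 1" using rf rg unfolding rep_def by auto
  show "\<forall>u. u \<notin> {0..1} \<longrightarrow> fjoin f g u = 0" by (simp add: fjoin_def)
  show "\<forall>v\<in>{0..1}. fjoin f g v = min (min (A v) (C v)) (max (B v) (D v)) \<and>
     0 \<le> min (A v) (C v) \<and> min (A v) (C v) \<le> 1 \<and> 0 \<le> max (B v) (D v) \<and> max (B v) (D v) \<le> 1 \<and>
     (max p q \<le> v \<longrightarrow> min (A v) (C v) = 1) \<and> (v \<le> max p q \<longrightarrow> max (B v) (D v) = 1)"
  proof
    fix v :: real assume v: "v \<in> {0..1}"
    have a: "0 \<le> A v" "A v \<le> 1" "0 \<le> B v" "B v \<le> 1" "p \<le> v \<longrightarrow> A v = 1" "v \<le> p \<longrightarrow> B v = 1"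
      using rf v unfolding rep_def by auto
    have c: "0 \<le> C v" "C v \<le> 1" "0 \<le> D v" "D v \<le> 1" "q \<le> v \<longrightarrow> C v = 1" "v \<le> q \<longrightarrow> D v = 1"
      using rg v unfolding rep_def by auto
    show "fjoin f g v = min (min (A v) (C v)) (max (B v) (D v)) \<and>
     0 \<le> min (A v) (C v) \<and> min (A v) (C v) \<le> 1 \<and> 0 \<le> max (B v) (D v) \<and> max (B v) (D v) \<le> 1 \<and>
     (max p q \<le> v \<longrightarrow> min (A v) (C v) = 1) \<and> (v \<le> max p q \<longrightarrow> max (B v) (D v) = 1)"
      using join_val[OF rf rg v] a c by (auto simp: min_def max_def)
  qed
  show "\<forall>u v. 0 \<le> u \<longrightarrow> u \<le> v \<longrightarrow> v \<le> 1 \<longrightarrow> min (A u) (C u) \<le> min (A v) (C v) \<and> max (B v) (D v) \<le> max (B u) (D u)"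
  proof (intro allI impI)
    fix u v :: real assume uv: "0 \<le> u" "u \<le> v" "v \<le> 1"
    have "A u \<le> A v" "B v \<le> B u" using rf uv unfolding rep_def by auto
    moreover have "C u \<le> C v" "D v \<le> D u" using rg uv unfolding rep_def by auto
    ultimately show "min (A u) (C u) \<le> min (A v) (C v) \<and> max (B v) (D v) \<le> max (B u) (D u)"
      by linarith
  qed
qed

lemma nc_meet: "nc f \<Longrightarrow> nc g \<Longrightarrow> nc (fmeet f g)"
  unfolding nc_def using meet_rep by blast
lemma nc_join: "nc f \<Longrightarrow> nc g \<Longrightarrow> nc (fjoin f g)"
  unfolding nc_def using join_rep by blast

lemma meet_LR:
  assumes "nc f" "nc g" "v \<in> {0..1}"
  shows "fL (fmeet f g) v = max (fL f v) (fL g v) \<and> fR (fmeet f g) v = min (fR f v) (fR g v)"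
proof -
  obtain p q where "rep f (fL f) (fR f) p" "rep g (fL g) (fR g) q" using assms nc_canon by blast
  from meet_rep[OF this] show ?thesis using rep_L rep_R assms(3) by fastforce
qed

lemma join_LR:
  assumes "nc f" "nc g" "v \<in> {0..1}"
  shows "fL (fjoin f g) v = min (fL f v) (fL g v) \<and> fR (fjoin f g) v = max (fR f v) (fR g v)"
proof -
  obtain p q where "rep f (fL f) (fR f) p" "rep g (fL g) (fR g) q" using assms nc_canon by blast
  from join_rep[OF this] show ?thesis using rep_L rep_R assms(3) by fastforce
qed

lemma rep_one: "rep (fpt 1 1) (\<lambda>v. if v = 1 then 1 else 0) (\<lambda>v. 1) 1"
  unfolding rep_def fpt_def by auto

lemma nc_one: "nc (fpt 1 1)" unfolding nc_def using rep_one by blast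

lemma ncfd_nc: assumes "NCFD f" shows "nc f"
proof -
  from assms obtain p where p: "p \<in> {0..1}" "f p = 1" unfolding NCFD_def by blast
  have z: "\<forall>u. u \<notin> {0..1} \<longrightarrow> f u = 0" and b: "\<forall>u\<in>{0..1}. 0 \<le> f u \<and> f u \<le> 1"
    and c: "\<forall>ui\<in>{0..1}. \<forall>uj\<in>{0..1}. \<forall>uk\<in>{0..1}.
        ui \<le> uj \<and> uj \<le> uk \<longrightarrow> f uj \<ge> min (f ui) (f uk)" using assms unfolding NCFD_def by auto
  define A where "A v = (if v \<le> p then f v else 1)" for v
  define B where "B v = (if p \<le> v then f v else 1)" for v
  have "rep f A B p"
    unfolding rep_def
  proof (intro conjI)
    show "0 \<le> p" "p \<le> 1" using p by auto
    show "\<forall>u. u \<notin> {0..1} \<longrightarrow> f u = 0" by fact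
    show "\<forall>v\<in>{0..1}. f v = min (A v) (B v) \<and> 0 \<le> A v \<and> A v \<le> 1 \<and> 0 \<le> B v \<and> B v \<le> 1
       \<and> (p \<le> v \<longrightarrow> A v = 1) \<and> (v \<le> p \<longrightarrow> B v = 1)"
      using b p unfolding A_def B_def by (auto simp: min_def)
    show "\<forall>u v. 0 \<le> u \<longrightarrow> u \<le> v \<longrightarrow> v \<le> 1 \<longrightarrow> A u \<le> A v \<and> B v \<le> B u"
    proof (intro allI impI conjI)
      fix u v :: real assume uv: "0 \<le> u" "u \<le> v" "v \<le> 1"
      show "A u \<le> A v"
      proof (cases "v \<le> p")
        case True
        have "f v \<ge> min (f u) (f p)" using c[rule_format, of u v p] uv p True by auto
        moreover have "f u \<le> 1" using b uv p True by auto
        ultimately show ?thesis using True uv p unfolding A_def by auto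
      next
        case False then show ?thesis using b uv unfolding A_def by auto
      qed
      show "B v \<le> B u"
      proof (cases "p \<le> u")
        case True
        have "f u \<ge> min (f p) (f v)" using c[rule_format, of p u v] uv p True by auto
        moreover have "f v \<le> 1" using b uv p True by auto
        ultimately show ?thesis using True uv p unfolding B_def by auto
      next
        case False then show ?thesis using b uv unfolding B_def by auto
      qed
    qed
  qed
  then show ?thesis unfolding nc_def by blast
qed

lemma le_trans[trans]: "le a b \<Longrightarrow> le b c \<Longrightarrow> le a c"
  unfolding le_def by force

lemma le_meet_left: "nc a \<Longrightarrow> nc b \<Longrightarrow> le (fmeet a b) a"
  unfolding le_def using meet_LR by simp

lemma le_join_up1: "nc a \<Longrightarrow> nc b \<Longrightarrow> le a (fjoin a b)"
  unfolding le_def using join_LR by simp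

lemma le_join_up2: "nc a \<Longrightarrow> nc b \<Longrightarrow> le b (fjoin a b)"
  unfolding le_def using join_LR by simp

lemma le_join_least: "nc a \<Longrightarrow> nc b \<Longrightarrow> le a c \<Longrightarrow> le b c \<Longrightarrow> le (fjoin a b) c"
  unfolding le_def using join_LR by simp

lemma le_one: assumes "nc f" shows "le f (fpt 1 1)"
proof -
  obtain p where r: "rep f (fL f) (fR f) p" using assms nc_canon by blast
  have "\<And>v. v \<in> {0..1} \<Longrightarrow> fL (fpt 1 1) v \<le> fL f v \<and> fR f v \<le> fR (fpt 1 1) v"
  proof -
    fix v :: real assume v: "v \<in> {0..1}"
    have "fL (fpt 1 1) v = (if v = 1 then 1 else 0)" "fR (fpt 1 1) v = 1"
      using rep_L[OF rep_one v] rep_R[OF rep_one v] by auto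
    moreover have "0 \<le> fL f v" "fR f v \<le> 1" using r v unfolding rep_def by auto
    moreover have "v = 1 \<Longrightarrow> fL f v = 1" using r v unfolding rep_def by auto
    ultimately show "fL (fpt 1 1) v \<le> fL f v \<and> fR f v \<le> fR (fpt 1 1) v" by auto
  qed
  then show ?thesis unfolding le_def by blast
qed

lemma le_meet_one: assumes "nc f" shows "le f (fmeet f (fpt 1 1))"
  using le_one[OF assms] meet_LR[OF assms nc_one] unfolding le_def by auto

lemma fsub_of_le: assumes "nc f" "nc g" "le f g" shows "fsub f g"
proof -
  obtain p q where rf: "rep f (fL f) (fR f) p" and rg: "rep g (fL g) (fR g) q"
    using assms nc_canon by blast
  have "fmeet f g v = f v" for v
  proof (cases "v \<in> {0..1}")
    case True
    have "fL g v \<le> fL f v" "fR f v \<le> fR g v" using assms(3) True unfolding le_def by auto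
    moreover have "f v = min (fL f v) (fR f v)" using rf True unfolding rep_def by auto
    ultimately show ?thesis using meet_val[OF rf rg True] by (simp add: max_absorb1 min_absorb1)
  next
    case False
    then show ?thesis using rf unfolding fmeet_def rep_def by auto
  qed
  then show ?thesis unfolding fsub_def by auto
qed

lemma bigjoin_1: "bigjoin (Suc 0) f = f 0" unfolding bigjoin_def by simp

lemma bigjoin_Suc: "0 < n \<Longrightarrow> bigjoin (Suc n) f = fjoin (bigjoin n f) (f n)"
  unfolding bigjoin_def by simp

lemma nc_bigjoin: "0 < n \<Longrightarrow> (\<forall>y<n. nc (f y)) \<Longrightarrow> nc (bigjoin n f)"
proof (induction n)
  case 0 then show ?case by simp
next
  case (Suc n)
  then show ?case
    by (cases "n = 0") (auto simp: bigjoin_1 bigjoin_Suc intro!: nc_join)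
qed

lemma le_bigjoin_upper: "y < n \<Longrightarrow> (\<forall>y<n. nc (f y)) \<Longrightarrow> le (f y) (bigjoin n f)"
proof (induction n)
  case 0 then show ?case by simp
next
  case (Suc n)
  show ?case
  proof (cases "n = 0")
    case True then show ?thesis using Suc by (simp add: bigjoin_1 le_def)
  next
    case False
    have nb: "nc (bigjoin n f)" using Suc False nc_bigjoin by auto
    show ?thesis
    proof (cases "y = n")
      case True then show ?thesis using False Suc nb by (simp add: bigjoin_Suc le_join_up2)
    next
      case F2: False
      then have "le (f y) (bigjoin n f)" using Suc by auto
      moreover have "le (bigjoin n f) (bigjoin (Suc n) f)" using False Suc nb le_join_up1 by (simp add: bigjoin_Suc)
      ultimately show ?thesis using le_trans by blast
    qed
  qed
qed

lemma le_bigjoin_least: "0 < n \<Longrightarrow> (\<forall>y<n. nc (f y) \<and> le (f y) c) \<Longrightarrow> le (bigjoin n f) c"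
proof (induction n)
  case 0 then show ?case by simp
next
  case (Suc n)
  show ?case
  proof (cases "n = 0")
    case True then show ?thesis using Suc by (simp add: bigjoin_1)
  next
    case False
    have nb: "nc (bigjoin n f)" using Suc False nc_bigjoin by auto
    then show ?thesis using Suc False by (simp add: bigjoin_Suc le_join_least)
  qed
qed

lemma nc_run:
  assumes "bifuzzy_automaton n Ev x0 xm" "set s \<subseteq> Ev"
  shows "\<forall>z<n. nc (run n x0 s z)"
  using assms(2)
proof (induction s rule: rev_induct)
  case Nil
  then show ?case using assms(1) ncfd_nc unfolding bifuzzy_automaton_def run_def by auto
next
  case (snoc \<sigma> s)
  have IH: "\<forall>z<n. nc (run n x0 s z)" using snoc by auto
  have s: "\<forall>i<n. \<forall>j<n. nc (\<sigma> i j)" using snoc assms(1) ncfd_nc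
    unfolding bifuzzy_automaton_def by auto
  have n: "0 < n" using assms(1) unfolding bifuzzy_automaton_def by auto
  show ?case unfolding run_def foldl_append
    using IH s n by (auto simp: vecmat_def run_def intro!: nc_bigjoin nc_meet)
qed

theorem proposition2:
  fixes n :: nat and Ev :: "fmat set" and x0 xm :: fvec
    and s :: "fmat list" and \<sigma> :: fmat
  assumes "bifuzzy_automaton n Ev x0 xm"
    and "set s \<subseteq> Ev" and "\<sigma> \<in> Ev"
  shows "fsub (LGm n x0 xm (s @ [\<sigma>])) (LG n x0 (s @ [\<sigma>])) \<and>
         fsub (LG n x0 (s @ [\<sigma>])) (LG n x0 s)"
proof -
  have n: "0 < n" using assms(1) unfolding bifuzzy_automaton_def by auto
  have xm: "\<forall>i<n. nc (xm i)" using assms(1) ncfd_nc unfolding bifuzzy_automaton_def by auto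
  have sg: "\<forall>i<n. \<forall>j<n. nc (\<sigma> i j)" using assms(1,3) ncfd_nc
    unfolding bifuzzy_automaton_def by auto
  define r where "r = run n x0 s"
  define r' where "r' = run n x0 (s @ [\<sigma>])"
  have nr: "\<forall>z<n. nc (r z)" using nc_run[OF assms(1,2)] r_def by simp
  have nr': "\<forall>z<n. nc (r' z)" using nc_run[OF assms(1)] assms(2,3) r'_def by simp
  have r'e: "r' z = bigjoin n (\<lambda>y. fmeet (r y) (\<sigma> y z))" for z
    unfolding r'_def r_def run_def by (simp add: vecmat_def)
  have LG': "LG n x0 (s @ [\<sigma>]) = bigjoin n (\<lambda>y. fmeet (r' y) (fpt 1 1))"
    unfolding LG_def vecdot_def r'_def by simp
  have LGm': "LGm n x0 xm (s @ [\<sigma>]) = bigjoin n (\<lambda>y. fmeet (r' y) (xm y))"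
    unfolding LGm_def vecdot_def r'_def by simp
  have ncLG': "nc (LG n x0 (s @ [\<sigma>]))" unfolding LG'
    using n nr' nc_one by (auto intro!: nc_bigjoin nc_meet)
  have ncLGm': "nc (LGm n x0 xm (s @ [\<sigma>]))" unfolding LGm'
    using n nr' xm by (auto intro!: nc_bigjoin nc_meet)
  have g1: "le (LGm n x0 xm (s @ [\<sigma>])) (LG n x0 (s @ [\<sigma>]))"
    unfolding LGm'
  proof (rule le_bigjoin_least[OF n], intro allI impI conjI)
    fix y assume y: "y < n"
    show "nc (fmeet (r' y) (xm y))" using y nr' xm nc_meet by auto
    have "le (fmeet (r' y) (xm y)) (r' y)" using y nr' xm le_meet_left by auto
    also have "le (r' y) (fmeet (r' y) (fpt 1 1))" using y nr' le_meet_one by auto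
    also have "le (fmeet (r' y) (fpt 1 1)) (LG n x0 (s @ [\<sigma>]))" unfolding LG'
      using y nr' nc_one nc_meet by (intro le_bigjoin_upper) auto
    finally show "le (fmeet (r' y) (xm y)) (LG n x0 (s @ [\<sigma>]))" .
  qed
  have g2: "le (LG n x0 (s @ [\<sigma>])) (LG n x0 s) \<and> nc (LG n x0 s)"
  proof (cases "s = []")
    case True
    then have "LG n x0 s = fpt 1 1" unfolding LG_def by simp
    then show ?thesis using le_one ncLG' nc_one by simp
  next
    case False
    then have LGs: "LG n x0 s = bigjoin n (\<lambda>y. fmeet (r y) (fpt 1 1))"
      unfolding LG_def vecdot_def r_def by simp
    have nc: "nc (LG n x0 s)" unfolding LGs using n nr nc_one by (auto intro!: nc_bigjoin nc_meet)
    have "le (LG n x0 (s @ [\<sigma>])) (LG n x0 s)"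
      unfolding LG'
    proof (rule le_bigjoin_least[OF n], intro allI impI conjI)
      fix z assume z: "z < n"
      show "nc (fmeet (r' z) (fpt 1 1))" using z nr' nc_one nc_meet by auto
      have "le (fmeet (r' z) (fpt 1 1)) (r' z)" using z nr' nc_one le_meet_left by auto
      also have "le (r' z) (LG n x0 s)" unfolding r'e
      proof (rule le_bigjoin_least[OF n], intro allI impI conjI)
        fix y assume y: "y < n"
        show "nc (fmeet (r y) (\<sigma> y z))" using y z nr sg nc_meet by auto
        have "le (fmeet (r y) (\<sigma> y z)) (r y)" using y z nr sg le_meet_left by auto
        also have "le (r y) (fmeet (r y) (fpt 1 1))" using y nr le_meet_one by auto
        also have "le (fmeet (r y) (fpt 1 1)) (LG n x0 s)" unfolding LGs
          using y nr nc_one nc_meet by (intro le_bigjoin_upper) auto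
        finally show "le (fmeet (r y) (\<sigma> y z)) (LG n x0 s)" .
      qed
      finally show "le (fmeet (r' z) (fpt 1 1)) (LG n x0 s)" .
    qed
    then show ?thesis using nc by simp
  qed
  show ?thesis using g1 g2 ncLG' ncLGm' fsub_of_le by blast
qed

end
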